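(* For every regular language $L\subseteq\Sigma^*$, the nondeterministic syntactic complexity $\mathrm{nsyn}(L)$ equals the least number of states of any subatomic nfa accepting $L$.
   Context: $\mathrm{LQ}(L)$ is the finite semilattice (under $\subseteq$) of all finite unions, including $\emptyset$, of left derivatives $u^{-1}L=\{w:uw\in L\}$. The syntactic monoid $\mathrm{Syn}(L)$ is $\Sigma^*$ modulo $v\equiv_L w\iff\forall x,y\,(xvy\in L\Leftrightarrow xwy\in L)$, with classes $[w]_L$. For a finite semilattice $S$, $\mathbf{JSL}(S,S)$ is the monoid of join-preserving maps $S\to S$ with $f\cdot g:=g\circ f$. A boolean representation of a monoid $M$ is a finite semilattice $S$ with a monoid morphism $\rho\colon M\to\mathbf{JSL}(S,S)$; its degree is $|J(S)|$, the number of join-irreducible elements of $S$. $\rho_2$ extends $\rho_1$ if there is an injective join-preserving $f\colon S_1\to S_2$ with $f(\rho_1(m)(s))=\rho_2(m)(f(s))$ for all $m\in M$, $s\in S_1$. The canonical representation is $\kappa_L\colon\mathrm{Syn}(L)\to\mathbf{JSL}(\mathrm{LQ}(L),\mathrm{LQ}(L))$, $[w]_L\mapsto(K\mapsto w^{-1}K)$. $\mathrm{nsyn}(L)$ is the least degree of a boolean representation of $\mathrm{Syn}(L)$ extending $\kappa_L$. An nfa (finite states, transition relations, sets of initial and final states) accepting $L$ is subatomic if every state accepts a language in the boolean subalgebra of $\mathcal{P}(\Sigma^* )$ generated by all two-sided derivatives $u^{-1}Lv^{-1}=\{w:uwv\in L\}$. *)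

theory Defs
  imports Main
begin

definition lder :: "'a list \<Rightarrow> 'a list set \<Rightarrow> 'a list set" where
  "lder u L = {w. u @ w \<in> L}"

definition tsder :: "'a list \<Rightarrow> 'a list set \<Rightarrow> 'a list \<Rightarrow> 'a list set" where
  "tsder u L v = {w. u @ w @ v \<in> L}"

definition LQ :: "'a list set \<Rightarrow> 'a list set set" where
  "LQ L = {\<Union>D | D. finite D \<and> D \<subseteq> range (\<lambda>u. lder u L)}"

definition syn_eq :: "'a list set \<Rightarrow> 'a list \<Rightarrow> 'a list \<Rightarrow> bool" where
  "syn_eq L v w \<longleftrightarrow> (\<forall>x y. x @ v @ y \<in> L \<longleftrightarrow> x @ w @ y \<in> L)"

definition syn_class :: "'a list set \<Rightarrow> 'a list \<Rightarrow> 'a list set" where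
  "syn_class L w = {v. syn_eq L v w}"

text \<open>Elements of Syn(L) are the classes syn_class L w; multiplication is
  [v][w] = [v @ w], the unit is [[]].\<close>

definition finite_jsl :: "nat set \<Rightarrow> (nat \<Rightarrow> nat \<Rightarrow> nat) \<Rightarrow> nat \<Rightarrow> bool" where
  "finite_jsl S j b \<longleftrightarrow> finite S \<and> b \<in> S \<and>
     (\<forall>x\<in>S. \<forall>y\<in>S. j x y \<in> S) \<and>
     (\<forall>x\<in>S. \<forall>y\<in>S. \<forall>z\<in>S. j (j x y) z = j x (j y z)) \<and>
     (\<forall>x\<in>S. \<forall>y\<in>S. j x y = j y x) \<and>
     (\<forall>x\<in>S. j x x = x) \<and>
     (\<forall>x\<in>S. j b x = x)"

definition jsl_endo :: "nat set \<Rightarrow> (nat \<Rightarrow> nat \<Rightarrow> nat) \<Rightarrow> nat \<Rightarrow> (nat \<Rightarrow> nat) \<Rightarrow> bool" where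
  "jsl_endo S j b f \<longleftrightarrow> (\<forall>x\<in>S. f x \<in> S) \<and> f b = b \<and>
     (\<forall>x\<in>S. \<forall>y\<in>S. f (j x y) = j (f x) (f y))"

definition join_irr :: "nat set \<Rightarrow> (nat \<Rightarrow> nat \<Rightarrow> nat) \<Rightarrow> nat \<Rightarrow> nat set" where
  "join_irr S j b = {x \<in> S. x \<noteq> b \<and> (\<forall>y\<in>S. \<forall>z\<in>S. x = j y z \<longrightarrow> x = y \<or> x = z)}"

text \<open>A boolean representation of Syn(L): a finite JSL S together with a monoid morphism
  rho : Syn(L) \<rightarrow> JSL(S,S), where JSL(S,S) has multiplication f\<cdot>g = g \<circ> f.\<close>
definition bool_rep ::
  "'a list set \<Rightarrow> nat set \<Rightarrow> (nat \<Rightarrow> nat \<Rightarrow> nat) \<Rightarrow> nat \<Rightarrow> ('a list set \<Rightarrow> nat \<Rightarrow> nat) \<Rightarrow> bool" where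
  "bool_rep L S j b \<rho> \<longleftrightarrow> finite_jsl S j b \<and>
     (\<forall>w. jsl_endo S j b (\<rho> (syn_class L w))) \<and>
     (\<forall>x\<in>S. \<rho> (syn_class L []) x = x) \<and>
     (\<forall>v w. \<forall>x\<in>S. \<rho> (syn_class L (v @ w)) x = \<rho> (syn_class L w) (\<rho> (syn_class L v) x))"

text \<open>rho extends the canonical representation kappa_L ([w] \<mapsto> (K \<mapsto> w^{-1} K)) on LQ(L)
  (a JSL under union with bottom the empty set).\<close>
definition extends_canonical ::
  "'a list set \<Rightarrow> nat set \<Rightarrow> (nat \<Rightarrow> nat \<Rightarrow> nat) \<Rightarrow> nat \<Rightarrow> ('a list set \<Rightarrow> nat \<Rightarrow> nat) \<Rightarrow> bool" where
  "extends_canonical L S j b \<rho> \<longleftrightarrow>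
     (\<exists>f :: 'a list set \<Rightarrow> nat.
        inj_on f (LQ L) \<and> (\<forall>K\<in>LQ L. f K \<in> S) \<and> f {} = b \<and>
        (\<forall>K\<in>LQ L. \<forall>K'\<in>LQ L. f (K \<union> K') = j (f K) (f K')) \<and>
        (\<forall>w. \<forall>K\<in>LQ L. f (lder w K) = \<rho> (syn_class L w) (f K)))"

definition nsyn :: "'a list set \<Rightarrow> nat" where
  "nsyn L = (LEAST n. \<exists>S j b \<rho>. bool_rep L S j b \<rho> \<and> extends_canonical L S j b \<rho>
                          \<and> card (join_irr S j b) = n)"

record 'a nfa =
  states :: "nat set"
  trans :: "nat \<Rightarrow> 'a \<Rightarrow> nat set"
  init :: "nat set"
  final :: "nat set"

definition wf_nfa :: "'a nfa \<Rightarrow> bool" where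
  "wf_nfa A \<longleftrightarrow> finite (states A) \<and> init A \<subseteq> states A \<and> final A \<subseteq> states A \<and>
     (\<forall>q\<in>states A. \<forall>a. trans A q a \<subseteq> states A)"

fun reach :: "'a nfa \<Rightarrow> nat \<Rightarrow> 'a list \<Rightarrow> nat set" where
  "reach A q [] = {q}"
| "reach A q (a # w) = (\<Union>p\<in>trans A q a. reach A p w)"

definition state_lang :: "'a nfa \<Rightarrow> nat \<Rightarrow> 'a list set" where
  "state_lang A q = {w. reach A q w \<inter> final A \<noteq> {}}"

definition nfa_lang :: "'a nfa \<Rightarrow> 'a list set" where
  "nfa_lang A = (\<Union>q\<in>init A. state_lang A q)"

definition regular :: "'a list set \<Rightarrow> bool" where
  "regular L \<longleftrightarrow> (\<exists>A. wf_nfa A \<and> nfa_lang A = L)"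

inductive_set bool_gen :: "'b set set \<Rightarrow> 'b set set" for G where
  gen: "X \<in> G \<Longrightarrow> X \<in> bool_gen G"
| empty: "{} \<in> bool_gen G"
| compl: "X \<in> bool_gen G \<Longrightarrow> - X \<in> bool_gen G"
| union: "X \<in> bool_gen G \<Longrightarrow> Y \<in> bool_gen G \<Longrightarrow> X \<union> Y \<in> bool_gen G"

definition subatomic :: "'a nfa \<Rightarrow> bool" where
  "subatomic A \<longleftrightarrow> (\<forall>q\<in>states A.
     state_lang A q \<in> bool_gen {tsder u (nfa_lang A) v | u v. True})"

end

theory Submission
  imports Defs
begin

lemma reach_append: "reach A q (u @ w) = (\<Union>p\<in>reach A q u. reach A p w)"
  by (induction u arbitrary: q) auto

lemma reach_states: "wf_nfa A \<Longrightarrow> q \<in> states A \<Longrightarrow> reach A q w \<subseteq> states A"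
  by (induction w arbitrary: q) (auto simp: wf_nfa_def, blast)

lemma state_lang_append: "(u @ w \<in> state_lang A q) = (\<exists>p\<in>reach A q u. w \<in> state_lang A p)"
  by (auto simp: state_lang_def reach_append)

lemma lder_state_lang: "lder u (state_lang A q) = (\<Union>p\<in>reach A q u. state_lang A p)"
  by (auto simp: lder_def state_lang_append)

lemma lder_nfa_lang: "lder u (nfa_lang A) = (\<Union>q\<in>init A. \<Union>p\<in>reach A q u. state_lang A p)"
  by (auto simp: lder_def nfa_lang_def state_lang_append)

lemma tsder_nfa: "tsder u (nfa_lang A) v =
   {w. \<exists>p\<in>(\<Union>q\<in>init A. reach A q u). \<exists>r\<in>reach A p w. r \<in> {s. v \<in> state_lang A s}}"
  by (auto simp: tsder_def nfa_lang_def state_lang_append)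

lemma finite_tsders:
  assumes "wf_nfa A"
  shows "finite {tsder u (nfa_lang A) v | u v. True}"
proof -
  define F where "F = (\<lambda>(P,R). {w. \<exists>p\<in>P. \<exists>r\<in>reach A p w. r \<in> R})"
  have "{tsder u (nfa_lang A) v | u v. True} \<subseteq> F ` (Pow (states A) \<times> Pow (states A))"
  proof
    fix T assume "T \<in> {tsder u (nfa_lang A) v | u v. True}"
    then obtain u v where T: "T = tsder u (nfa_lang A) v" by blast
    let ?P = "\<Union>q\<in>init A. reach A q u"
    let ?R = "states A \<inter> {s. v \<in> state_lang A s}"
    have P: "?P \<subseteq> states A" using reach_states[OF assms] assms by (auto simp: wf_nfa_def)
    have "T = F (?P, ?R)"
    proof -
      have "T = {w. \<exists>p\<in>?P. \<exists>r\<in>reach A p w. r \<in> {s. v \<in> state_lang A s}}"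
        unfolding T tsder_nfa by blast
      also have "\<dots> = F (?P, ?R)"
        unfolding F_def using reach_states[OF assms] P by fastforce
      finally show ?thesis .
    qed
    then show "T \<in> F ` (Pow (states A) \<times> Pow (states A))" using P by auto
  qed
  then show ?thesis by (rule finite_subset) (use assms in \<open>auto simp: wf_nfa_def\<close>)
qed

lemma bool_gen_inter: "X \<in> bool_gen G \<Longrightarrow> Y \<in> bool_gen G \<Longrightarrow> X \<inter> Y \<in> bool_gen G"
proof -
  assume "X \<in> bool_gen G" "Y \<in> bool_gen G"
  then have "- (- X \<union> - Y) \<in> bool_gen G"
    by (intro bool_gen.compl bool_gen.union) auto
  then show ?thesis by simp
qed

lemma bool_gen_UNIV: "UNIV \<in> bool_gen G"
  using bool_gen.compl[OF bool_gen.empty] by simp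

lemma bool_gen_Inter: "finite F \<Longrightarrow> F \<subseteq> bool_gen G \<Longrightarrow> \<Inter>F \<in> bool_gen G"
  by (induction F rule: finite_induct) (auto intro: bool_gen_inter bool_gen_UNIV)

lemma bool_gen_Union: "finite F \<Longrightarrow> F \<subseteq> bool_gen G \<Longrightarrow> \<Union>F \<in> bool_gen G"
  by (induction F rule: finite_induct) (auto intro: bool_gen.intros)

definition sclosed :: "'a list set \<Rightarrow> 'a list set \<Rightarrow> bool" where
  "sclosed L X \<longleftrightarrow> (\<forall>w w'. w \<in> X \<longrightarrow> syn_eq L w w' \<longrightarrow> w' \<in> X)"

lemma syn_eq_sym: "syn_eq L w w' \<Longrightarrow> syn_eq L w' w"
  by (auto simp: syn_eq_def)

lemma sclosed_bool_gen:
  "X \<in> bool_gen {tsder u L v | u v. True} \<Longrightarrow> sclosed L X"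
proof (induction rule: bool_gen.induct)
  case (gen X)
  then show ?case by (auto simp: sclosed_def tsder_def syn_eq_def)
next
  case empty
  then show ?case by (auto simp: sclosed_def)
next
  case (compl X)
  then show ?case unfolding sclosed_def by (blast dest: syn_eq_sym)
next
  case (union X Y)
  then show ?case unfolding sclosed_def by blast
qed

lemma sclosed_in_bool_gen:
  assumes fin: "finite {tsder u L v | u v. True}" and cl: "sclosed L X"
  shows "X \<in> bool_gen {tsder u L v | u v. True}"
proof -
  define T where "T = {tsder u L v | u v. True}"
  define at where "at = (\<lambda>U. \<Inter>((\<lambda>t. if t \<in> U then t else - t) ` T))"
  have atm0: "w' \<in> at {t\<in>T. w \<in> t} \<longleftrightarrow> (\<forall>t\<in>T. w' \<in> t \<longleftrightarrow> w \<in> t)" for w w'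
    by (auto simp: at_def split: if_splits)
  have atm: "w' \<in> at {t\<in>T. w \<in> t} \<longleftrightarrow> syn_eq L w' w" for w w'
  proof -
    have "(\<forall>t\<in>T. w' \<in> t \<longleftrightarrow> w \<in> t) \<longleftrightarrow> (\<forall>u v. w' \<in> tsder u L v \<longleftrightarrow> w \<in> tsder u L v)"
      unfolding T_def by blast
    also have "\<dots> \<longleftrightarrow> syn_eq L w' w" by (simp add: tsder_def syn_eq_def)
    finally show ?thesis using atm0 by simp
  qed
  have atb: "at U \<in> bool_gen T" for U
    unfolding at_def using fin unfolding T_def[symmetric]
    by (intro bool_gen_Inter) (auto intro: bool_gen.intros)
  have "X = \<Union>((\<lambda>w. at {t\<in>T. w \<in> t}) ` X)"
  proof
    show "X \<subseteq> \<Union>((\<lambda>w. at {t\<in>T. w \<in> t}) ` X)"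
      using atm by (auto simp: syn_eq_def)
    show "\<Union>((\<lambda>w. at {t\<in>T. w \<in> t}) ` X) \<subseteq> X"
      using atm cl unfolding sclosed_def by (blast dest: syn_eq_sym)
  qed
  also have "\<dots> \<in> bool_gen T"
  proof (rule bool_gen_Union)
    have "(\<lambda>w. at {t\<in>T. w \<in> t}) ` X \<subseteq> at ` Pow T" by auto
    then show "finite ((\<lambda>w. at {t\<in>T. w \<in> t}) ` X)"
      using fin unfolding T_def[symmetric] by (meson finite_Pow_iff finite_imageI finite_subset)
    show "(\<lambda>w. at {t\<in>T. w \<in> t}) ` X \<subseteq> bool_gen T" using atb by auto
  qed
  finally show ?thesis unfolding T_def .
qed


locale fjsl =
  fixes S :: "nat set" and j :: "nat \<Rightarrow> nat \<Rightarrow> nat" and b :: nat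
  assumes fin: "finite S" and bS: "b \<in> S" and jS: "x\<in>S \<Longrightarrow> y\<in>S \<Longrightarrow> j x y \<in> S"
  and assoc: "x\<in>S \<Longrightarrow> y\<in>S \<Longrightarrow> z\<in>S \<Longrightarrow> j (j x y) z = j x (j y z)"
  and comm: "x\<in>S \<Longrightarrow> y\<in>S \<Longrightarrow> j x y = j y x"
  and idem: "x\<in>S \<Longrightarrow> j x x = x"
  and bot: "x\<in>S \<Longrightarrow> j b x = x"
begin

definition le where "le x y \<longleftrightarrow> j x y = y"

lemma le_refl: "x\<in>S \<Longrightarrow> le x x"
  by (simp add: le_def idem)

lemma le_trans: "x\<in>S \<Longrightarrow> y\<in>S \<Longrightarrow> z\<in>S \<Longrightarrow> le x y \<Longrightarrow> le y z \<Longrightarrow> le x z"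
  unfolding le_def by (metis assoc)

lemma le_antisym: "x\<in>S \<Longrightarrow> y\<in>S \<Longrightarrow> le x y \<Longrightarrow> le y x \<Longrightarrow> x = y"
  unfolding le_def by (metis comm)

lemma le_join: "x\<in>S \<Longrightarrow> y\<in>S \<Longrightarrow> t\<in>S \<Longrightarrow> le x t \<Longrightarrow> le y t \<Longrightarrow> le (j x y) t"
  unfolding le_def by (metis assoc)

lemma le_join1: "x\<in>S \<Longrightarrow> y\<in>S \<Longrightarrow> le x (j x y)"
  unfolding le_def by (metis assoc idem)

lemma le_join2: "x\<in>S \<Longrightarrow> y\<in>S \<Longrightarrow> le y (j x y)"
  using le_join1 comm by metis

lemma le_bot: "x\<in>S \<Longrightarrow> le b x"
  by (simp add: le_def bot)

definition pres :: "(nat \<Rightarrow> nat) \<Rightarrow> bool" where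
  "pres g \<longleftrightarrow> (\<forall>x\<in>S. g x \<in> S) \<and> g b = b \<and> (\<forall>x\<in>S. \<forall>y\<in>S. g (j x y) = j (g x) (g y))"

lemma pres_id: "pres (\<lambda>x. x)"
  by (simp add: pres_def)

lemma mono: "pres g \<Longrightarrow> x\<in>S \<Longrightarrow> y\<in>S \<Longrightarrow> le x y \<Longrightarrow> le (g x) (g y)"
  unfolding pres_def le_def by metis

lemma J_S: "join_irr S j b \<subseteq> S"
  by (auto simp: join_irr_def)

lemma decomp:
  assumes g: "pres g"
  shows "s \<in> S \<Longrightarrow> t \<in> S \<Longrightarrow> (\<forall>z\<in>join_irr S j b. le z s \<longrightarrow> le (g z) t) \<Longrightarrow> le (g s) t"
proof (induction "card {x\<in>S. le x s}" arbitrary: s rule: less_induct)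
  case less
  have gS: "\<And>x. x \<in> S \<Longrightarrow> g x \<in> S" and gb: "g b = b"
    and gj: "\<And>x y. x\<in>S \<Longrightarrow> y\<in>S \<Longrightarrow> g (j x y) = j (g x) (g y)" using g by (auto simp: pres_def)
  show ?case
  proof (cases "s = b")
    case True
    then show ?thesis using gb le_bot less by simp
  next
    case nb: False
    show ?thesis
    proof (cases "s \<in> join_irr S j b")
      case True
      then show ?thesis using less le_refl by blast
    next
      case False
      then obtain y z where yz: "y \<in> S" "z \<in> S" "s = j y z" "s \<noteq> y" "s \<noteq> z"
        using nb less.prems(1) unfolding join_irr_def by blast
      have ys: "le y s" using le_join1 yz by simp
      have zs: "le z s" using le_join2 yz by simp
      have down: "card {x\<in>S. le x u} < card {x\<in>S. le x s}" if "u \<in> S" "le u s" "u \<noteq> s" for u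
      proof (rule psubset_card_mono)
        show "finite {x\<in>S. le x s}" using fin by simp
        have "{x\<in>S. le x u} \<subseteq> {x\<in>S. le x s}" using le_trans that less.prems(1) by blast
        moreover have "s \<notin> {x\<in>S. le x u}" using le_antisym that less.prems(1) by blast
        moreover have "s \<in> {x\<in>S. le x s}" using le_refl less.prems(1) by blast
        ultimately show "{x\<in>S. le x u} \<subset> {x\<in>S. le x s}" by blast
      qed
      have sub: "\<forall>z\<in>join_irr S j b. le z u \<longrightarrow> le (g z) t" if "u \<in> S" "le u s" for u
      proof (intro ballI impI)
        fix z assume z: "z \<in> join_irr S j b" "le z u"
        have "z \<in> S" using z(1) J_S by blast
        then have "le z s" using le_trans[OF _ that(1) less.prems(1) z(2) that(2)] by blast
        then show "le (g z) t" using less.prems(3) z(1) by blast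
      qed
      have hy: "le (g y) t"
        by (rule less.hyps[OF down[OF yz(1) ys] yz(1) less.prems(2) sub[OF yz(1) ys]]) (use yz(4) in auto)
      have hz: "le (g z) t"
        by (rule less.hyps[OF down[OF yz(2) zs] yz(2) less.prems(2) sub[OF yz(2) zs]]) (use yz(5) in auto)
      show ?thesis using le_join[OF gS gS less.prems(2) hy hz] yz gj by simp
    qed
  qed
qed

lemma decomp_iff:
  assumes g: "pres g" and s: "s \<in> S" and t: "t \<in> S"
  shows "le (g s) t \<longleftrightarrow> (\<forall>z\<in>join_irr S j b. le z s \<longrightarrow> le (g z) t)"
proof
  assume h: "le (g s) t"
  show "\<forall>z\<in>join_irr S j b. le z s \<longrightarrow> le (g z) t"
  proof (intro ballI impI)
    fix z assume "z \<in> join_irr S j b" "le z s"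
    then have zS: "z \<in> S" using J_S by blast
    have "le (g z) (g s)" using mono[OF g zS s] \<open>le z s\<close> .
    moreover have "g z \<in> S" "g s \<in> S" using g zS s unfolding pres_def by auto
    ultimately show "le (g z) t" using le_trans t h by blast
  qed
qed (rule decomp[OF g s t])

end

lemma fjsl_of: "finite_jsl S j b \<Longrightarrow> fjsl S j b"
  unfolding finite_jsl_def by unfold_locales auto


lemma lder_LQ: "lder u L \<in> LQ L"
  unfolding LQ_def by (rule CollectI, rule exI[of _ "{lder u L}"]) auto

lemma LQ_union: "K \<in> LQ L \<Longrightarrow> K' \<in> LQ L \<Longrightarrow> K \<union> K' \<in> LQ L"
proof -
  assume "K \<in> LQ L" "K' \<in> LQ L"
  then obtain D D' where "K = \<Union>D" "finite D" "D \<subseteq> range (\<lambda>u. lder u L)"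
    "K' = \<Union>D'" "finite D'" "D' \<subseteq> range (\<lambda>u. lder u L)" unfolding LQ_def by blast
  then show ?thesis unfolding LQ_def by (intro CollectI exI[of _ "D \<union> D'"]) auto
qed

lemma syn_class_eq: "syn_eq L w w' \<Longrightarrow> syn_class L w = syn_class L w'"
  by (auto simp: syn_class_def syn_eq_def)

lemma rep_to_nfa:
  fixes L :: "'a list set"
  assumes reg: "regular L" and rep: "bool_rep L S j b \<rho>" and ext: "extends_canonical L S j b \<rho>"
  shows "\<exists>A :: 'a nfa. wf_nfa A \<and> nfa_lang A = L \<and> subatomic A \<and> card (states A) = card (join_irr S j b)"
proof -
  obtain f :: "'a list set \<Rightarrow> nat" where finj: "inj_on f (LQ L)" and fS: "\<forall>K\<in>LQ L. f K \<in> S"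
    and fb: "f {} = b" and fj: "\<forall>K\<in>LQ L. \<forall>K'\<in>LQ L. f (K \<union> K') = j (f K) (f K')"
    and fr: "\<forall>w. \<forall>K\<in>LQ L. f (lder w K) = \<rho> (syn_class L w) (f K)"
    using ext unfolding extends_canonical_def by blast
  have fjsl: "finite_jsl S j b" and endo: "\<And>w. jsl_endo S j b (\<rho> (syn_class L w))"
    and r1: "\<And>x. x\<in>S \<Longrightarrow> \<rho> (syn_class L []) x = x"
    and r2: "\<And>v w x. x\<in>S \<Longrightarrow> \<rho> (syn_class L (v @ w)) x = \<rho> (syn_class L w) (\<rho> (syn_class L v) x)"
    using rep unfolding bool_rep_def by auto
  interpret fjsl S j b by (rule fjsl_of[OF fjsl])
  define r where "r = (\<lambda>w. \<rho> (syn_class L w))"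
  have rpres: "pres (r w)" for w using endo[of w] unfolding jsl_endo_def pres_def r_def by auto
  have rS: "x \<in> S \<Longrightarrow> r w x \<in> S" for w x using rpres[of w] unfolding pres_def by auto
  have finLQ: "finite (LQ L)"
  proof -
    have "f ` LQ L \<subseteq> S" using fS by auto
    then have "finite (f ` LQ L)" using fin by (rule finite_subset)
    then show ?thesis using finj by (rule finite_imageD)
  qed
  have finD: "finite (range (\<lambda>u. lder u L))"
    using finLQ by (rule finite_subset[rotated]) (auto intro: lder_LQ)
  define K0 where "K0 = \<Union>{K \<in> range (\<lambda>u. lder u L). [] \<notin> K}"
  have K0LQ: "K0 \<in> LQ L" unfolding LQ_def K0_def using finD
    by (intro CollectI exI[of _ "{K \<in> range (\<lambda>u. lder u L). [] \<notin> K}"]) auto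
  have K0e: "K \<in> LQ L \<Longrightarrow> ([] \<in> K \<longleftrightarrow> \<not> K \<subseteq> K0)" for K
  proof -
    assume "K \<in> LQ L"
    then obtain D where D: "K = \<Union>D" "D \<subseteq> range (\<lambda>u. lder u L)" unfolding LQ_def by blast
    show ?thesis
    proof
      assume "[] \<in> K" then show "\<not> K \<subseteq> K0" unfolding K0_def by auto
    next
      assume "\<not> K \<subseteq> K0"
      then obtain x where x: "x \<in> K" "x \<notin> K0" by blast
      then obtain E where E: "E \<in> D" "x \<in> E" using D(1) by blast
      then have "E \<in> range (\<lambda>u. lder u L)" using D(2) by blast
      then have "[] \<in> E" using E x unfolding K0_def by blast
      then show "[] \<in> K" using E D(1) by blast
    qed
  qed
  have forder: "K \<in> LQ L \<Longrightarrow> K' \<in> LQ L \<Longrightarrow> le (f K) (f K') \<longleftrightarrow> K \<subseteq> K'" for K K'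
  proof -
    assume KK: "K \<in> LQ L" "K' \<in> LQ L"
    have "le (f K) (f K') \<longleftrightarrow> f (K \<union> K') = f K'" using fj KK by (simp add: le_def)
    also have "\<dots> \<longleftrightarrow> K \<union> K' = K'"
    proof
      assume "f (K \<union> K') = f K'"
      then show "K \<union> K' = K'" using inj_onD[OF finj _ LQ_union[OF KK] KK(2)] by simp
    qed simp
    finally show ?thesis by blast
  qed
  have LLQ: "L \<in> LQ L" using lder_LQ[of "[]" L] by (simp add: lder_def)
  define Jr where "Jr = join_irr S j b"
  have JrS: "Jr \<subseteq> S" using J_S Jr_def by simp
  define A :: "'a nfa" where "A = \<lparr>states = Jr, trans = (\<lambda>y a. {z\<in>Jr. le z (r [a] y)}),
      init = {z\<in>Jr. le z (f L)}, final = {z\<in>Jr. \<not> le z (f K0)}\<rparr>"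
  have t0: "f K0 \<in> S" using fS K0LQ by blast
  have key: "y \<in> Jr \<Longrightarrow> (w \<in> state_lang A y \<longleftrightarrow> \<not> le (r w y) (f K0))" for w y
  proof (induction w arbitrary: y)
    case Nil
    then show ?case using r1 JrS by (auto simp: state_lang_def A_def r_def)
  next
    case (Cons a w)
    have yS: "y \<in> S" using Cons.prems JrS by blast
    have "a # w \<in> state_lang A y \<longleftrightarrow> (\<exists>z\<in>trans A y a. w \<in> state_lang A z)"
      by (auto simp: state_lang_def)
    also have "\<dots> \<longleftrightarrow> (\<exists>z\<in>Jr. le z (r [a] y) \<and> \<not> le (r w z) (f K0))"
      using Cons.IH by (auto simp: A_def)
    also have "\<dots> \<longleftrightarrow> \<not> le (r w (r [a] y)) (f K0)"
      unfolding Jr_def by (simp add: decomp_iff[OF rpres[of w] rS[OF yS] t0])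
    also have "r w (r [a] y) = r (a # w) y" using r2[OF yS, of "[a]" w] by (simp add: r_def)
    finally show ?case .
  qed
  have wf: "wf_nfa A" using fin JrS by (auto simp: wf_nfa_def A_def intro: finite_subset)
  have lang: "nfa_lang A = L"
  proof (intro set_eqI)
    fix w
    have fLS: "f L \<in> S" using fS LLQ by blast
    have "w \<in> nfa_lang A \<longleftrightarrow> (\<exists>y\<in>Jr. le y (f L) \<and> \<not> le (r w y) (f K0))"
      using key by (auto simp: nfa_lang_def A_def)
    also have "\<dots> \<longleftrightarrow> \<not> le (r w (f L)) (f K0)"
      unfolding Jr_def by (simp add: decomp_iff[OF rpres[of w] fLS t0])
    also have "r w (f L) = f (lder w L)" using fr LLQ by (simp add: r_def)
    also have "\<not> le (f (lder w L)) (f K0) \<longleftrightarrow> [] \<in> lder w L"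
      using forder[OF lder_LQ K0LQ] K0e[OF lder_LQ] by blast
    also have "\<dots> \<longleftrightarrow> w \<in> L" by (simp add: lder_def)
    finally show "w \<in> nfa_lang A \<longleftrightarrow> w \<in> L" .
  qed
  obtain B where B: "wf_nfa B" "nfa_lang B = L" using reg unfolding regular_def by blast
  have finT: "finite {tsder u L v | u v. True}" using finite_tsders[OF B(1)] B(2) by simp
  have sub: "subatomic A"
    unfolding subatomic_def lang
  proof
    fix y assume y: "y \<in> states A"
    have "state_lang A y = {w. \<not> le (r w y) (f K0)}" using key y by (auto simp: A_def)
    moreover have "sclosed L {w. \<not> le (r w y) (f K0)}"
      unfolding sclosed_def r_def
    proof (intro allI impI)
      fix w w' assume "w \<in> {w. \<not> le (\<rho> (syn_class L w) y) (f K0)}" "syn_eq L w w'"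
      then show "w' \<in> {w. \<not> le (\<rho> (syn_class L w) y) (f K0)}" using syn_class_eq[of L w w'] by simp
    qed
    ultimately show "state_lang A y \<in> bool_gen {tsder u L v | u v. True}"
      using sclosed_in_bool_gen[OF finT] by simp
  qed
  show ?thesis
  proof (intro exI conjI)
    show "card (states A) = card (join_irr S j b)" by (simp add: A_def Jr_def)
  qed (fact wf lang sub)+
qed


lemma lder_sclosed: "sclosed L K \<Longrightarrow> syn_eq L w w' \<Longrightarrow> lder w K = lder w' K"
proof -
  assume cl: "sclosed L K" and e: "syn_eq L w w'"
  have "syn_eq L (w @ x) (w' @ x)" for x using e unfolding syn_eq_def
    by (metis append.assoc)
  then show ?thesis using cl syn_eq_sym unfolding sclosed_def lder_def by blast
qed

lemma nfa_to_rep: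
  fixes L :: "'a list set"
  assumes wf: "wf_nfa A" and lang: "nfa_lang A = L" and sub: "subatomic A"
  shows "\<exists>S j b \<rho>. bool_rep L S j b \<rho> \<and> extends_canonical L S j b \<rho> \<and> card (join_irr S j b) \<le> card (states A)"
proof -
  define Q where "Q = states A"
  define Lq where "Lq = state_lang A"
  define SS where "SS = {\<Union>(Lq ` X) | X. X \<subseteq> Q}"
  have finQ: "finite Q" using wf by (simp add: wf_nfa_def Q_def)
  have clq: "q \<in> Q \<Longrightarrow> sclosed L (Lq q)" for q
    using sub lang sclosed_bool_gen unfolding subatomic_def Q_def Lq_def by blast
  have clS: "K \<in> SS \<Longrightarrow> sclosed L K" for K
    using clq unfolding SS_def sclosed_def by blast
  have finSS: "finite SS"
  proof -
    have "SS = (\<lambda>X. \<Union>(Lq ` X)) ` Pow Q" unfolding SS_def by blast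
    then show ?thesis using finQ by simp
  qed
  have SS_Union: "D \<subseteq> SS \<Longrightarrow> \<Union>D \<in> SS" for D
  proof -
    assume D: "D \<subseteq> SS"
    let ?X = "{q\<in>Q. Lq q \<subseteq> \<Union>D}"
    have "\<Union>D = \<Union>(Lq ` ?X)"
    proof
      show "\<Union>(Lq ` ?X) \<subseteq> \<Union>D" by blast
      show "\<Union>D \<subseteq> \<Union>(Lq ` ?X)"
      proof
        fix x assume "x \<in> \<Union>D"
        then obtain K where K: "K \<in> D" "x \<in> K" by blast
        then obtain X where X: "X \<subseteq> Q" "K = \<Union>(Lq ` X)" using D unfolding SS_def by blast
        then obtain q where "q \<in> X" "x \<in> Lq q" using K by blast
        moreover have "Lq q \<subseteq> \<Union>D" using K X \<open>q \<in> X\<close> by blast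
        ultimately show "x \<in> \<Union>(Lq ` ?X)" using X by blast
      qed
    qed
    then show ?thesis unfolding SS_def by blast
  qed
  have emS: "{} \<in> SS" using SS_Union[of "{}"] by simp
  have unS: "K \<in> SS \<Longrightarrow> K' \<in> SS \<Longrightarrow> K \<union> K' \<in> SS" for K K'
    using SS_Union[of "{K, K'}"] by simp
  have lderS: "K \<in> SS \<Longrightarrow> lder w K \<in> SS" for K w
  proof -
    assume "K \<in> SS"
    then obtain X where X: "X \<subseteq> Q" "K = \<Union>(Lq ` X)" unfolding SS_def by blast
    have "lder w K = \<Union>(Lq ` (\<Union>q\<in>X. reach A q w))"
      unfolding X(2) Lq_def by (auto simp: lder_def state_lang_append)
    moreover have "(\<Union>q\<in>X. reach A q w) \<subseteq> Q" using X(1) reach_states[OF wf] unfolding Q_def by blast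
    ultimately show ?thesis unfolding SS_def by blast
  qed
  have LQS: "LQ L \<subseteq> SS"
  proof
    fix K assume "K \<in> LQ L"
    then obtain D where D: "K = \<Union>D" "D \<subseteq> range (\<lambda>u. lder u L)" unfolding LQ_def by blast
    have "lder u L \<in> SS" for u
    proof -
      have "lder u L = \<Union>(Lq ` (\<Union>q\<in>init A. reach A q u))"
        unfolding lang[symmetric] lder_nfa_lang Lq_def by blast
      moreover have "(\<Union>q\<in>init A. reach A q u) \<subseteq> Q"
        using wf reach_states[OF wf] unfolding Q_def wf_nfa_def by blast
      ultimately show ?thesis unfolding SS_def by blast
    qed
    then have "D \<subseteq> SS" using D(2) by blast
    then show "K \<in> SS" using SS_Union D(1) by simp
  qed
  obtain enc :: "'a list set \<Rightarrow> nat" and n where enc: "inj_on enc SS"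
    using finite_imp_inj_to_nat_seg[OF finSS] by blast
  define dec where "dec = the_inv_into SS enc"
  have de: "K \<in> SS \<Longrightarrow> dec (enc K) = K" for K
    unfolding dec_def using the_inv_into_f_f[OF enc] by blast
  have ed: "x \<in> enc ` SS \<Longrightarrow> enc (dec x) = x" for x
    unfolding dec_def using f_the_inv_into_f[OF enc] by blast
  have dS: "x \<in> enc ` SS \<Longrightarrow> dec x \<in> SS" for x
    unfolding dec_def using the_inv_into_into[OF enc] by blast
  define S where "S = enc ` SS"
  define j where "j = (\<lambda>x y. enc (dec x \<union> dec y))"
  define b where "b = enc {}"
  define \<rho> where "\<rho> = (\<lambda>c x. enc (lder (SOME w. syn_class L w = c) (dec x)))"
  have rho: "x \<in> S \<Longrightarrow> \<rho> (syn_class L w) x = enc (lder w (dec x))" for x w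
  proof -
    assume x: "x \<in> S"
    define w' where "w' = (SOME w'. syn_class L w' = syn_class L w)"
    have "syn_class L w' = syn_class L w" unfolding w'_def by (rule someI) simp
    moreover have "w' \<in> syn_class L w'" by (simp add: syn_class_def syn_eq_def)
    ultimately have "syn_eq L w' w" by (simp add: syn_class_def)
    then have "lder w' (dec x) = lder w (dec x)"
      using lder_sclosed clS dS x unfolding S_def by blast
    then show ?thesis unfolding \<rho>_def w'_def by simp
  qed
  have jS: "x \<in> S \<Longrightarrow> y \<in> S \<Longrightarrow> j x y \<in> S" for x y
    unfolding j_def S_def using dS unS by blast
  have fjsl: "finite_jsl S j b"
    unfolding finite_jsl_def
  proof (intro conjI ballI)
    show "finite S" unfolding S_def using finSS by simp
    show "b \<in> S" unfolding S_def b_def using emS by blast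
    fix x assume x: "x \<in> S"
    show "j x x = x" using x ed unfolding j_def S_def by simp
    show "j b x = x" using x ed de emS unfolding j_def S_def b_def by simp
    fix y assume y: "y \<in> S"
    show "j x y \<in> S" using jS x y .
    show "j x y = j y x" unfolding j_def by (simp add: Un_commute)
    fix z assume z: "z \<in> S"
    show "j (j x y) z = j x (j y z)"
      using x y z de dS unS unfolding j_def S_def by (simp add: Un_assoc)
  qed
  have rep: "bool_rep L S j b \<rho>"
    unfolding bool_rep_def
  proof (intro conjI allI ballI)
    show "finite_jsl S j b" by (fact fjsl)
    fix w
    show "jsl_endo S j b (\<rho> (syn_class L w))"
      unfolding jsl_endo_def
    proof (intro conjI ballI)
      fix x assume x: "x \<in> S"
      show "\<rho> (syn_class L w) x \<in> S" using rho[OF x] dS x lderS unfolding S_def by simp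
    next
      have "b \<in> S" using fjsl by (simp add: finite_jsl_def)
      then show "\<rho> (syn_class L w) b = b" using rho de emS unfolding b_def by (simp add: lder_def)
    next
      fix x y assume x: "x \<in> S" and y: "y \<in> S"
      have "\<rho> (syn_class L w) (j x y) = enc (lder w (dec x \<union> dec y))"
        using rho[OF jS[OF x y]] de dS x y unS unfolding j_def S_def by simp
      also have "\<dots> = enc (lder w (dec x) \<union> lder w (dec y))" by (simp add: lder_def Un_def)
      also have "\<dots> = j (\<rho> (syn_class L w) x) (\<rho> (syn_class L w) y)"
        using rho[OF x] rho[OF y] de dS x y lderS unfolding j_def S_def by simp
      finally show "\<rho> (syn_class L w) (j x y) = j (\<rho> (syn_class L w) x) (\<rho> (syn_class L w) y)" .
    qed
  next
    fix x assume x: "x \<in> S"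
    show "\<rho> (syn_class L []) x = x" using rho[OF x] ed x unfolding S_def by (simp add: lder_def)
  next
    fix v w x assume x: "x \<in> S"
    have vx: "\<rho> (syn_class L v) x \<in> S" using rho[OF x] dS x lderS unfolding S_def by simp
    have "lder (v @ w) (dec x) = lder w (lder v (dec x))" by (simp add: lder_def)
    then show "\<rho> (syn_class L (v @ w)) x = \<rho> (syn_class L w) (\<rho> (syn_class L v) x)"
      using rho[OF x] rho[OF vx] de dS x lderS unfolding S_def by simp
  qed
  have ext: "extends_canonical L S j b \<rho>"
    unfolding extends_canonical_def
  proof (intro exI[of _ enc] conjI ballI allI)
    show "inj_on enc (LQ L)" using enc LQS by (rule inj_on_subset)
    show "enc {} = b" unfolding b_def by (rule refl)
    fix K assume K: "K \<in> LQ L"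
    then have KS: "K \<in> SS" using LQS by blast
    show "enc K \<in> S" using KS unfolding S_def by simp
    {
      fix K' assume K': "K' \<in> LQ L"
      then have "K' \<in> SS" using LQS by blast
      then show "enc (K \<union> K') = j (enc K) (enc K')" using KS de unfolding j_def by simp
    }
    fix w
    show "enc (lder w K) = \<rho> (syn_class L w) (enc K)"
      using rho[of "enc K" w] KS de unfolding S_def by simp
  qed
  have irr: "finite X \<Longrightarrow> X \<subseteq> Q \<Longrightarrow> enc (\<Union>(Lq ` X)) \<in> join_irr S j b \<Longrightarrow> \<exists>q\<in>X. enc (\<Union>(Lq ` X)) = enc (Lq q)" for X
  proof (induction X rule: finite_induct)
    case empty
    then show ?case by (simp add: join_irr_def b_def)
  next
    case (insert q X)
    have qS: "Lq q \<in> SS" and XS: "\<Union>(Lq ` X) \<in> SS" using insert.prems(1) unfolding SS_def by blast+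
    have eq: "enc (\<Union>(Lq ` insert q X)) = j (enc (Lq q)) (enc (\<Union>(Lq ` X)))"
      using qS XS de unfolding j_def by simp
    have "enc (Lq q) \<in> S" "enc (\<Union>(Lq ` X)) \<in> S" using qS XS unfolding S_def by simp_all
    then have "enc (\<Union>(Lq ` insert q X)) = enc (Lq q) \<or> enc (\<Union>(Lq ` insert q X)) = enc (\<Union>(Lq ` X))"
      using insert.prems(2) eq unfolding join_irr_def by blast
    then show ?case
    proof
      assume "enc (\<Union>(Lq ` insert q X)) = enc (\<Union>(Lq ` X))"
      then show ?case using insert.IH insert.prems by auto
    qed auto
  qed
  have "join_irr S j b \<subseteq> (\<lambda>q. enc (Lq q)) ` Q"
  proof
    fix x assume x: "x \<in> join_irr S j b"
    then have "x \<in> S" by (simp add: join_irr_def)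
    then obtain X where X: "X \<subseteq> Q" "x = enc (\<Union>(Lq ` X))" unfolding S_def SS_def by blast
    then show "x \<in> (\<lambda>q. enc (Lq q)) ` Q" using irr[OF finite_subset[OF X(1) finQ] X(1)] x by blast
  qed
  then have "card (join_irr S j b) \<le> card ((\<lambda>q. enc (Lq q)) ` Q)"
    using finQ by (intro card_mono) auto
  also have "\<dots> \<le> card (states A)" unfolding Q_def by (rule card_image_le) (use finQ Q_def in simp)
  finally show ?thesis using rep ext by blast
qed


lemma Least_eqI2:
  fixes P Q :: "nat \<Rightarrow> bool"
  assumes PQ: "\<And>n. P n \<Longrightarrow> \<exists>m\<le>n. Q m" and QP: "\<And>n. Q n \<Longrightarrow> \<exists>m\<le>n. P m"
  shows "(LEAST n. P n) = (LEAST n. Q n)"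
proof (cases "\<exists>n. P n")
  case True
  then obtain n where "P n" by blast
  then have P1: "P (LEAST n. P n)" by (rule LeastI)
  then obtain m where m: "m \<le> (LEAST n. P n)" "Q m" using PQ by blast
  have Q1: "Q (LEAST n. Q n)" using m(2) by (rule LeastI)
  then obtain k where k: "k \<le> (LEAST n. Q n)" "P k" using QP by blast
  have "(LEAST n. Q n) \<le> m" using m(2) by (rule Least_le)
  moreover have "(LEAST n. P n) \<le> k" using k(2) by (rule Least_le)
  ultimately show ?thesis using m k by linarith
next
  case False
  then have "\<forall>n. \<not> Q n" using QP by blast
  with False have "P = Q" by auto
  then show ?thesis by simp
qed

theorem theorem4p13:
  fixes L :: "('a :: finite) list set"
  assumes "regular L"
  shows "nsyn L = (LEAST n. \<exists>A :: 'a nfa. wf_nfa A \<and> nfa_lang A = L \<and> subatomic A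
                               \<and> card (states A) = n)"
  unfolding nsyn_def
proof (rule Least_eqI2)
  fix n assume "\<exists>S j b \<rho>. bool_rep L S j b \<rho> \<and> extends_canonical L S j b \<rho> \<and> card (join_irr S j b) = n"
  then obtain S j b \<rho> where h: "bool_rep L S j b \<rho>" "extends_canonical L S j b \<rho>" "card (join_irr S j b) = n"
    by blast
  show "\<exists>m\<le>n. \<exists>A :: 'a nfa. wf_nfa A \<and> nfa_lang A = L \<and> subatomic A \<and> card (states A) = m"
    using rep_to_nfa[OF assms h(1,2)] h(3) by auto
next
  fix n assume "\<exists>A :: 'a nfa. wf_nfa A \<and> nfa_lang A = L \<and> subatomic A \<and> card (states A) = n"
  then obtain A :: "'a nfa" where h: "wf_nfa A" "nfa_lang A = L" "subatomic A" "card (states A) = n"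
    by blast
  show "\<exists>m\<le>n. \<exists>S j b \<rho>. bool_rep L S j b \<rho> \<and> extends_canonical L S j b \<rho> \<and> card (join_irr S j b) = m"
  proof -
    obtain S j b \<rho> where r: "bool_rep L S j b \<rho>" "extends_canonical L S j b \<rho>"
      "card (join_irr S j b) \<le> card (states A)" using nfa_to_rep[OF h(1,2,3)] by blast
    show ?thesis
      by (rule exI[of _ "card (join_irr S j b)"]) (use r h(4) in blast)
  qed
qed

end
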